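(* In the setting below, for every $\varepsilon>0$ and $v>0$ there exists $\kappa>0$ such that for all sufficiently large $t$, $$\mathbb P\Big(\max_{n\in\mathbb N,\ n_t(-v)\le n\le n_t(v)}\frac{F_n-g(\log(n\sqrt{\sigma_t}))}{g'(\log(n\sqrt{\sigma_t}))}\le\kappa\Big)\ge1-\varepsilon,$$ where $n_t(\pm v)=\exp\{\lambda(\sigma_t\pm v\sqrt{\sigma_t})\}$.
   Context: Let $\lambda>0$. Let $\mu$ be a probability distribution on $(0,1)$ such that $m(x)=-\log\mu((x,1))$, $x\in[0,1)$, is twice differentiable on $[0,1)$ with $m'>0$, $m''>0$, $\lim_{x\uparrow1}m''(x)/(m'(x))^2=0$, $\lim_{x\uparrow1}m''(x)m(x)x/(m'(x))^2=\varkappa>0$, and $\lim_{x\uparrow1}m(x)/m'(x)=0$. Let $g=m^{-1}:[0,\infty)\to[0,1)$; for large $t$ let $x_t\in[0,t)$ be the unique solution of $(\log g)'(\lambda x)=\frac1{\lambda(t-x)}$ and $\sigma_t=\max\{1,x_t\}$. Let $(F_n)_{n\ge1}$ be i.i.d. with law $\mu$. *)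

theory Defs
  imports "HOL-Probability.Probability"
begin

definition tail_m :: "real measure \<Rightarrow> real \<Rightarrow> real" where
  "tail_m \<mu> x = - ln (measure \<mu> {x<..<1})"

definition inv_g :: "real measure \<Rightarrow> real \<Rightarrow> real" where
  "inv_g \<mu> = the_inv_into {0..<1} (tail_m \<mu>)"

definition x_t :: "real measure \<Rightarrow> real \<Rightarrow> real \<Rightarrow> real" where
  "x_t \<mu> lam t = (THE x. x \<in> {0..<t} \<and>
      deriv (\<lambda>y. ln (inv_g \<mu> y)) (lam * x) = 1 / (lam * (t - x)))"

definition sigma_t :: "real measure \<Rightarrow> real \<Rightarrow> real \<Rightarrow> real" where
  "sigma_t \<mu> lam t = max 1 (x_t \<mu> lam t)"

end

theory Submission
  imports Defs
begin

lemma ln_step: assumes "x \<ge> (1::real)" shows "1 / (x + 1) \<le> ln (x + 1) - ln x"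
proof -
  have "ln (x / (x + 1)) \<le> x / (x + 1) - 1" using assms by (intro ln_le_minus_one) auto
  moreover have "ln (x / (x + 1)) = ln x - ln (x + 1)" using assms by (simp add: ln_div)
  moreover have "x / (x + 1) - 1 = - (1 / (x + 1))" using assms by (simp add: field_simps)
  ultimately show ?thesis by linarith
qed

lemma harm_int: assumes "N \<ge> (1::nat)"
  shows "(\<Sum>n\<in>{N..N+k}. 1 / real n) \<le> 1 / real N + ln (real (N + k)) - ln (real N)"
proof (induction k)
  case 0 then show ?case by simp
next
  case (Suc k)
  have "{N..N + Suc k} = insert (N + Suc k) {N..N+k}" by auto
  then have "(\<Sum>n\<in>{N..N+Suc k}. 1 / real n) = 1 / real (N + Suc k) + (\<Sum>n\<in>{N..N+k}. 1 / real n)"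
    by (simp del: of_nat_add of_nat_Suc)
  moreover have "1 / real (N + Suc k) \<le> ln (real (N + Suc k)) - ln (real (N + k))"
  proof -
    have e: "real (N + Suc k) = real (N + k) + 1" by simp
    show ?thesis unfolding e by (rule ln_step) (use assms in simp)
  qed
  ultimately show ?case using Suc.IH by linarith
qed

lemma harm: assumes a: "0 < a" and ab: "a \<le> b"
  shows "(\<Sum>n\<in>{n::nat. a \<le> real n \<and> real n \<le> b}. 1 / real n) \<le> 1 + ln b - ln a"
proof -
  define N1 where "N1 = nat \<lceil>a\<rceil>"
  define N2 where "N2 = nat \<lfloor>b\<rfloor>"
  have N1a: "real N1 \<ge> a" using a by (simp add: N1_def)
  have N11: "N1 \<ge> 1"
  proof -
    have "real N1 > 0" using N1a a by linarith
    then show ?thesis by simp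
  qed
  have N2b: "real N2 \<le> b" using a ab by (simp add: N2_def)
  have sub: "{n::nat. a \<le> real n \<and> real n \<le> b} \<subseteq> {N1..N2}"
    unfolding N1_def N2_def by (auto simp: nat_le_iff le_nat_iff ceiling_le_iff le_floor_iff)
  have lnab: "ln a \<le> ln b" using a ab by simp
  show ?thesis
  proof (cases "N1 \<le> N2")
    case False
    then have "{n::nat. a \<le> real n \<and> real n \<le> b} = {}" using sub by auto
    then have "(\<Sum>n\<in>{n::nat. a \<le> real n \<and> real n \<le> b}. 1 / real n) = 0" by (simp only: sum.empty)
    then show ?thesis using lnab by linarith
  next
    case True
    then obtain k where k: "N2 = N1 + k" using le_Suc_ex by blast
    have h1: "(\<Sum>n\<in>{n::nat. a \<le> real n \<and> real n \<le> b}. 1 / real n) \<le> (\<Sum>n\<in>{N1..N2}. 1 / real n)"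
      by (rule sum_mono2[OF _ sub]) auto
    have h2: "(\<Sum>n\<in>{N1..N2}. 1 / real n) \<le> 1 / real N1 + ln (real N2) - ln (real N1)"
      using harm_int[OF N11, of k] k by simp
    have h3: "1 / real N1 \<le> 1" using N11 by simp
    have h4: "ln (real N2) \<le> ln b" using N2b N11 True by (subst ln_le_cancel_iff) auto
    have h5: "ln (real N1) \<ge> ln a" using N1a a by (subst ln_le_cancel_iff) auto
    show ?thesis using h1 h2 h3 h4 h5 by linarith
  qed
qed

locale L =
  fixes \<mu> :: "real measure" and m' m'' :: "real \<Rightarrow> real"
  assumes mu_prob: "prob_space \<mu>" and mu_sets: "sets \<mu> = sets borel"
    and mu_supp: "measure \<mu> {0<..<1} = 1"
    and tail_pos: "\<forall>x\<in>{0..<1}. measure \<mu> {x<..<1} > 0"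
    and d1: "\<forall>x\<in>{0..<1}. (tail_m \<mu> has_real_derivative m' x) (at x within {0..<1})"
    and d2: "\<forall>x\<in>{0..<1}. (m' has_real_derivative m'' x) (at x within {0..<1})"
    and m1_pos: "\<forall>x\<in>{0..<1}. m' x > 0"
    and m2_pos: "\<forall>x\<in>{0..<1}. m'' x > 0"
begin

abbreviation "m \<equiv> tail_m \<mu>"
abbreviation "g \<equiv> inv_g \<mu>"

lemma m0: "m 0 = 0" using mu_supp by (simp add: tail_m_def)

lemma atx: assumes "0 < (x::real)" "x < 1" shows "at x within {0..<1} = at x"
  by (rule at_within_open_subset[of x "{0<..<1::real}" "{0..<1}"]) (use assms in auto)
lemma d1i: assumes "0 < x" "x < 1" shows "(m has_real_derivative m' x) (at x)"
proof -
  have "(m has_real_derivative m' x) (at x within {0..<1})" using d1 assms by simp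
  then show ?thesis using atx[OF assms] by simp
qed
lemma d2i: assumes "0 < x" "x < 1" shows "(m' has_real_derivative m'' x) (at x)"
proof -
  have "(m' has_real_derivative m'' x) (at x within {0..<1})" using d2 assms by simp
  then show ?thesis using atx[OF assms] by simp
qed

lemma cont_m: "continuous_on {0..<1} m"
  by (rule DERIV_continuous_on) (use d1 in auto)
lemma cont_m': "continuous_on {0..<1} m'"
  by (rule DERIV_continuous_on) (use d2 in auto)

lemma mvt_gen:
  fixes f f' :: "real \<Rightarrow> real"
  assumes c: "continuous_on {0..<1} f" and d: "\<And>x. 0 < x \<Longrightarrow> x < 1 \<Longrightarrow> (f has_real_derivative f' x) (at x)"
    and ab: "0 \<le> a" "a < b" "b < 1"
  shows "\<exists>z. a < z \<and> z < b \<and> f b - f a = (b - a) * f' z"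
proof -
  have "continuous_on {a..b} f" using c by (rule continuous_on_subset) (use ab in auto)
  moreover have "f differentiable (at x)" if "a < x" "x < b" for x
  proof -
    have "0 < x" "x < 1" using that ab by auto
    then show ?thesis using d real_differentiable_def by blast
  qed
  ultimately obtain l z where "a < z" "z < b" "DERIV f z :> l" "f b - f a = (b - a) * l"
    using MVT[OF ab(2)] by blast
  moreover have "l = f' z" using DERIV_unique[OF \<open>DERIV f z :> l\<close> d[of z]] ab \<open>a < z\<close> \<open>z < b\<close> by auto
  ultimately show ?thesis by blast
qed

lemma m_strict: assumes ab: "0 \<le> a" "a < b" "b < 1" shows "m a < m b"
proof -
  obtain z where z: "a < z" "z < b" "m b - m a = (b - a) * m' z"
    using mvt_gen[OF cont_m d1i ab] by blast
  have "m' z > 0" using m1_pos z ab by auto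
  then have "(b - a) * m' z > 0" using ab by simp
  then show ?thesis using z by linarith
qed

lemma m'_strict: assumes ab: "0 \<le> a" "a < b" "b < 1" shows "m' a < m' b"
proof -
  obtain z where z: "a < z" "z < b" "m' b - m' a = (b - a) * m'' z"
    using mvt_gen[OF cont_m' d2i ab] by blast
  have "m'' z > 0" using m2_pos z ab by auto
  then have "(b - a) * m'' z > 0" using ab by simp
  then show ?thesis using z by linarith
qed

lemma convex: "0 \<le> a \<Longrightarrow> a < b \<Longrightarrow> b < 1 \<Longrightarrow> m b \<ge> m a + m' a * (b - a)"
proof -
  assume ab: "0 \<le> a" "a < b" "b < 1"
  then obtain z where z: "a < z" "z < b" "m b - m a = (b - a) * m' z"
    using mvt_gen[OF cont_m d1i, of a b] by blast
  have "m' a \<le> m' z" using m'_strict[of a z] ab z by auto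
  then have "(b - a) * m' a \<le> (b - a) * m' z" using ab by (intro mult_left_mono) auto
  then show ?thesis using z by (simp add: algebra_simps)
qed

lemma inj_m: "inj_on m {0..<1}"
proof (rule inj_onI)
  fix x y assume xy: "x \<in> {0..<1}" "y \<in> {0..<1}" "m x = m y"
  show "x = y"
  proof (rule ccontr)
    assume "x \<noteq> y"
    then consider "x < y" | "y < x" by linarith
    then show False
      by cases (use m_strict[of x y] m_strict[of y x] xy in auto)
  qed
qed


lemma unbounded: "\<exists>x. 0 \<le> x \<and> x < 1 \<and> m x > B"
proof -
  interpret P: prob_space \<mu> by (rule mu_prob)
  define A where "A k = {1 - 1 / real (Suc k)<..<(1::real)}" for k
  have "A k \<in> sets borel" for k unfolding A_def by simp
  then have r: "range A \<subseteq> sets \<mu>" unfolding mu_sets by blast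
  have dec: "decseq A" unfolding decseq_def
  proof (intro allI impI)
    fix i j :: nat assume "i \<le> j"
    then have "1 / real (Suc j) \<le> 1 / real (Suc i)"
      by (intro divide_left_mono) auto
    then show "A j \<subseteq> A i" by (auto simp: A_def)
  qed
  have e: "(\<Inter>i. A i) = {}"
  proof (rule ccontr)
    assume "(\<Inter>i. A i) \<noteq> {}"
    then obtain x where x: "\<And>i. x \<in> A i" by blast
    then have "x < 1" by (auto simp: A_def)
    obtain k0 where k0: "1 / (1 - x) < real k0"
      using reals_Archimedean2 by blast
    define k where "k = k0"
    have k: "1 / (1 - x) < real (Suc k)" using k0 by (simp add: k_def)
    have "1 / real (Suc k) < 1 - x"
      using k \<open>x < 1\<close> by (simp add: field_simps)
    then show False using x[of k] by (auto simp: A_def)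
  qed
  have "(\<lambda>k. measure \<mu> (A k)) \<longlonglongrightarrow> 0"
    using P.finite_Lim_measure_decseq[OF r dec] e by simp
  then have "eventually (\<lambda>k. measure \<mu> (A k) < exp (- B)) sequentially"
    by (rule order_tendstoD) simp
  then obtain k where k: "measure \<mu> (A k) < exp (- B)"
    unfolding eventually_sequentially by blast
  define x where "x = 1 - 1 / real (Suc k)"
  have x01: "0 \<le> x" "x < 1" by (auto simp: x_def)
  have pos: "measure \<mu> (A k) > 0" using tail_pos x01 by (auto simp: A_def x_def)
  have "ln (measure \<mu> (A k)) < ln (exp (-B))" using k pos
    by (subst ln_less_cancel_iff) auto
  then have "ln (measure \<mu> (A k)) < -B" by simp
  then have "m x > B" by (simp add: tail_m_def A_def x_def)
  then show ?thesis using x01 by blast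
qed

lemma surj_m: assumes "y \<ge> 0" shows "\<exists>x. 0 \<le> x \<and> x < 1 \<and> m x = y"
proof -
  obtain b where b: "0 \<le> b" "b < 1" "m b > y" using unbounded by blast
  have "continuous_on {0..b} m" using cont_m by (rule continuous_on_subset) (use b in auto)
  then obtain x where "0 \<le> x" "x \<le> b" "m x = y"
    using IVT'[of m 0 y b] b assms m0 by auto
  then show ?thesis using b by auto
qed

lemma g_m: "0 \<le> x \<Longrightarrow> x < 1 \<Longrightarrow> g (m x) = x"
  unfolding inv_g_def by (rule the_inv_into_f_f[OF inj_m]) auto

lemma g_props: assumes "y \<ge> 0" shows "0 \<le> g y" "g y < 1" "m (g y) = y"
proof -
  obtain x where x: "0 \<le> x" "x < 1" "m x = y" using surj_m assms by blast
  then have "g y = x" using g_m by blast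
  then show "0 \<le> g y" "g y < 1" "m (g y) = y" using x by auto
qed

lemma g0: "g 0 = 0" using g_m[of 0] m0 by simp

lemma g_pos: assumes "y > 0" shows "g y > 0"
  using g_props[of y] assms m0 by (metis less_eq_real_def less_irrefl)

lemma g_deriv: assumes "y > 0" shows "deriv g y = inverse (m' (g y))"
proof -
  define x0 where "x0 = g y"
  have x0: "0 < x0" "x0 < 1" "m x0 = y" using g_props[of y] g_pos[of y] assms by (auto simp: x0_def)
  define d where "d = min x0 (1 - x0) / 2"
  have d: "d > 0" using x0 by (simp add: d_def)
  have zz: "0 < z \<and> z < 1" if "\<bar>z - x0\<bar> \<le> d" for z
  proof -
    have "\<bar>z - x0\<bar> * 2 \<le> x0" "\<bar>z - x0\<bar> * 2 \<le> 1 - x0" using that by (auto simp: d_def)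
    then show ?thesis using x0 by (auto simp: abs_if split: if_splits)
  qed
  have inj: "g (m z) = z" if "\<bar>z - x0\<bar> \<le> d" for z
  proof -
    have "0 < z" "z < 1" using zz that by auto
    then show ?thesis using g_m by simp
  qed
  have cont: "isCont m z" if "\<bar>z - x0\<bar> \<le> d" for z
  proof -
    have "0 < z" "z < 1" using zz that by auto
    then show ?thesis using d1i DERIV_isCont by blast
  qed
  have "isCont g (m x0)" using isCont_inverse_function[OF d, of x0 g m] inj cont by blast
  then have c: "isCont g y" using x0 by simp
  have "DERIV g y :> inverse (m' (g y))"
  proof (rule DERIV_inverse_function[where a=0 and b="y+1"])
    show "DERIV m (g y) :> m' (g y)" using d1i x0 by (simp add: x0_def)
    show "m' (g y) \<noteq> 0" using m1_pos x0 by (simp add: x0_def) (metis less_irrefl atLeastLessThan_iff less_eq_real_def)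
  qed (use assms c g_props in auto)
  then show ?thesis by (rule DERIV_imp_deriv)
qed


lemma space_mu: "space \<mu> = UNIV"
  using sets_eq_imp_space_eq[OF mu_sets] by simp

lemma restrict_bound: assumes S: "S \<in> sets borel" shows "measure \<mu> S \<le> measure \<mu> (S \<inter> {0<..<1})"
proof -
  interpret P: prob_space \<mu> by (rule mu_prob)
  have I: "{0<..<1::real} \<in> sets \<mu>" unfolding mu_sets by simp
  have S': "S \<in> sets \<mu>" using S unfolding mu_sets .
  have c: "measure \<mu> (UNIV - {0<..<1}) = 0"
    using P.prob_compl[OF I] mu_supp space_mu by simp
  have "measure \<mu> S \<le> measure \<mu> (S \<inter> {0<..<1}) + measure \<mu> (S - {0<..<1})"
  proof -
    have "S = (S \<inter> {0<..<1}) \<union> (S - {0<..<1})" by blast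
    then have "measure \<mu> S = measure \<mu> ((S \<inter> {0<..<1}) \<union> (S - {0<..<1}))" by simp
    also have "\<dots> \<le> measure \<mu> (S \<inter> {0<..<1}) + measure \<mu> (S - {0<..<1})"
      by (rule measure_Un_le) (use S' I in auto)
    finally show ?thesis .
  qed
  moreover have "measure \<mu> (S - {0<..<1}) \<le> measure \<mu> (UNIV - {0<..<1})"
    by (rule P.finite_measure_mono) (use sets.compl_sets[OF I] space_mu in auto)
  ultimately show ?thesis using c by linarith
qed

lemma key:
  assumes y: "y \<ge> 0" and kap: "\<kappa> > 0"
    and K: "deriv g 0 \<noteq> 0 \<Longrightarrow> \<kappa> \<ge> 1 / \<bar>deriv g 0\<bar>"
  shows "measure \<mu> {z. \<kappa> < (z - g y) / deriv g y} \<le> exp (- y) * exp (- \<kappa>)"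
proof -
  define S where "S = {z. \<kappa> < (z - g y) / deriv g y}"
  have Sb: "S \<in> sets borel" unfolding S_def by measurable
  have "measure \<mu> (S \<inter> {0<..<1}) \<le> exp (- y) * exp (- \<kappa>)"
  proof (cases "y = 0")
    case True
    define D where "D = deriv g 0"
    have "S \<inter> {0<..<1} = {}"
    proof (rule ccontr)
      assume "S \<inter> {0<..<1} \<noteq> {}"
      then obtain z where z: "\<kappa> < z / D" "0 < z" "z < 1"
        unfolding S_def using True g0 by (auto simp: D_def)
      consider "D = 0" | "D > 0" | "D < 0" by linarith
      then show False
      proof cases
        case 1 then show ?thesis using z kap by simp
      next
        case 2
        have "z / D < 1 / D" using z 2 by (simp add: divide_strict_right_mono)
        also have "\<dots> \<le> \<kappa>" using K 2 by (simp add: D_def)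
        finally show ?thesis using z by simp
      next
        case 3
        have "z / D < 0" using z 3 by (simp add: divide_pos_neg)
        then show ?thesis using z kap by simp
      qed
    qed
    then show ?thesis by simp
  next
    case False
    then have yp: "y > 0" using y by simp
    define x0 where "x0 = g y"
    have x0: "0 < x0" "x0 < 1" "m x0 = y" using g_props[OF y] g_pos[OF yp] by (auto simp: x0_def)
    define D where "D = inverse (m' x0)"
    have Dp: "D > 0" using m1_pos x0 by (simp add: D_def)
    have dD: "deriv g y = D" using g_deriv[OF yp] by (simp add: D_def x0_def)
    define c where "c = x0 + \<kappa> * D"
    have Seq: "S = {c<..}" unfolding S_def c_def dD x0_def[symmetric] using Dp
      by (auto simp: field_simps)
    show ?thesis
    proof (cases "c < 1")
      case False
      then have "S \<inter> {0<..<1} = {}" using Seq by auto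
      then show ?thesis by simp
    next
      case True
      have cx: "x0 < c" using kap Dp by (simp add: c_def)
      have "S \<inter> {0<..<1} = {c<..<1}" using Seq cx x0 by auto
      moreover have mpos: "measure \<mu> {c<..<1} > 0" using tail_pos cx x0 True by auto
      moreover have "m c \<ge> m x0 + m' x0 * (c - x0)" using convex[of x0 c] x0 cx True by simp
      moreover have "m' x0 * (c - x0) = \<kappa>"
      proof -
        have "m' x0 > 0" using m1_pos x0 by auto
        then show ?thesis by (simp add: c_def D_def)
      qed
      ultimately have "measure \<mu> (S \<inter> {0<..<1}) = exp (- m c)" and "m c \<ge> y + \<kappa>"
        using x0 by (auto simp: tail_m_def)
      then show ?thesis by (simp add: mult_exp_exp)
    qed
  qed
  then show ?thesis using restrict_bound[OF Sb] unfolding S_def by linarith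
qed


lemma main_bound:
  fixes lam v \<epsilon> \<kappa> t :: real and M :: "'a measure" and F :: "nat \<Rightarrow> 'a \<Rightarrow> real"
  assumes lam: "lam > 0" and v: "v > 0" and kap: "\<kappa> > 0"
    and K: "deriv g 0 \<noteq> 0 \<Longrightarrow> \<kappa> \<ge> 1 / \<bar>deriv g 0\<bar>"
    and E: "exp (- \<kappa>) * (1 + 2 * lam * v) \<le> \<epsilon>"
    and M_prob: "prob_space M"
    and F_indep: "prob_space.indep_vars M (\<lambda>_. borel) F {1..}"
    and F_law: "\<forall>n\<ge>1. distr M borel (F n) = \<mu>"
  shows "measure M {\<omega> \<in> space M. \<forall>n::nat.
              exp (lam * (sigma_t \<mu> lam t - v * sqrt (sigma_t \<mu> lam t))) \<le> real n \<and>
              real n \<le> exp (lam * (sigma_t \<mu> lam t + v * sqrt (sigma_t \<mu> lam t))) \<longrightarrow>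
              (F n \<omega> - inv_g \<mu> (ln (real n * sqrt (sigma_t \<mu> lam t))))
                / deriv (inv_g \<mu>) (ln (real n * sqrt (sigma_t \<mu> lam t))) \<le> \<kappa>}
           \<ge> 1 - \<epsilon>"
proof -
  interpret PM: prob_space M by (rule M_prob)
  define \<sigma> where "\<sigma> = sigma_t \<mu> lam t"
  have s1: "\<sigma> \<ge> 1" by (simp add: \<sigma>_def sigma_t_def)
  define a where "a = exp (lam * (\<sigma> - v * sqrt \<sigma>))"
  define b where "b = exp (lam * (\<sigma> + v * sqrt \<sigma>))"
  define W where "W = {n::nat. a \<le> real n \<and> real n \<le> b}"
  have apos: "a > 0" by (simp add: a_def)
  have ab: "a \<le> b" unfolding a_def b_def using lam v s1 by simp
  have lnab: "ln b - ln a = 2 * lam * v * sqrt \<sigma>" by (simp add: a_def b_def algebra_simps)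
  have finW: "finite W"
  proof (rule finite_subset)
    show "W \<subseteq> {..nat \<lceil>b\<rceil>}"
    proof
      fix n assume "n \<in> W"
      then have "real n \<le> b" by (simp add: W_def)
      then have "real n \<le> of_int \<lceil>b\<rceil>" using le_of_int_ceiling order_trans by blast
      then have "int n \<le> \<lceil>b\<rceil>" by (metis of_int_of_nat_eq of_int_le_iff)
      then show "n \<in> {..nat \<lceil>b\<rceil>}" by simp
    qed
  qed simp
  have W1: "n \<ge> 1" if "n \<in> W" for n
  proof -
    have "real n > 0" using that apos by (auto simp: W_def)
    then show ?thesis by simp
  qed
  have measF: "F n \<in> borel_measurable M" if "n \<ge> 1" for n
    using F_indep that unfolding PM.indep_vars_def2 by auto
  define y where "y n = ln (real n * sqrt \<sigma>)" for n
  define S where "S n = {z. \<kappa> < (z - g (y n)) / deriv g (y n)}" for n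
  define B where "B n = {\<omega> \<in> space M. \<kappa> < (F n \<omega> - g (y n)) / deriv g (y n)}" for n
  have Sb: "S n \<in> sets borel" for n unfolding S_def by measurable
  have BS: "B n = F n -` S n \<inter> space M" for n unfolding B_def S_def by auto
  have Bm: "B n \<in> sets M" if "n \<in> W" for n
    unfolding BS using measurable_sets[OF measF[OF W1[OF that]] Sb] .
  have Bb: "measure M (B n) \<le> exp (- \<kappa>) / sqrt \<sigma> * (1 / real n)" if "n \<in> W" for n
  proof -
    have n1: "n \<ge> 1" using W1 that .
    have "measure M (B n) = measure (distr M borel (F n)) (S n)"
      unfolding BS by (rule measure_distr[OF measF[OF n1] Sb, symmetric])
    also have "\<dots> = measure \<mu> (S n)" using F_law n1 by simp
    also have "\<dots> \<le> exp (- y n) * exp (- \<kappa>)" unfolding S_def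
    proof (rule key[OF _ kap K])
      have "real n * sqrt \<sigma> \<ge> 1 * 1" using n1 s1 by (intro mult_mono) auto
      then show "y n \<ge> 0" by (simp add: y_def)
    qed
    also have "exp (- y n) = inverse (real n * sqrt \<sigma>)"
    proof -
      have "real n * sqrt \<sigma> > 0" using n1 s1 by simp
      then have "exp (y n) = real n * sqrt \<sigma>" by (simp add: y_def)
      then show ?thesis by (simp add: exp_minus)
    qed
    finally show ?thesis by (simp add: field_simps)
  qed
  have setEq: "{\<omega> \<in> space M. \<forall>n::nat. a \<le> real n \<and> real n \<le> b \<longrightarrow>
      (F n \<omega> - g (y n)) / deriv g (y n) \<le> \<kappa>} = space M - (\<Union>n\<in>W. B n)"
    unfolding W_def B_def by (auto simp: not_less)
  have Um: "(\<Union>n\<in>W. B n) \<in> sets M" using Bm finW by blast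
  have "measure M (\<Union>n\<in>W. B n) \<le> (\<Sum>n\<in>W. measure M (B n))"
    by (rule measure_UNION_le[OF finW Bm])
  also have "\<dots> \<le> (\<Sum>n\<in>W. exp (- \<kappa>) / sqrt \<sigma> * (1 / real n))"
    by (rule sum_mono) (rule Bb)
  also have "\<dots> = exp (- \<kappa>) / sqrt \<sigma> * (\<Sum>n\<in>W. 1 / real n)"
    by (simp add: sum_distrib_left)
  also have "\<dots> \<le> exp (- \<kappa>) / sqrt \<sigma> * (1 + ln b - ln a)"
    using s1 by (intro mult_left_mono harm[OF apos ab, folded W_def]) auto
  also have "\<dots> = exp (- \<kappa>) * (1 / sqrt \<sigma> + 2 * lam * v)"
    using s1 lnab by (simp add: field_simps)
  also have "\<dots> \<le> exp (- \<kappa>) * (1 + 2 * lam * v)"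
    using s1 by (intro mult_left_mono) auto
  also have "\<dots> \<le> \<epsilon>" by (rule E)
  finally have U: "measure M (\<Union>n\<in>W. B n) \<le> \<epsilon>" .
  have "measure M (space M - (\<Union>n\<in>W. B n)) = 1 - measure M (\<Union>n\<in>W. B n)"
    by (rule PM.prob_compl[OF Um])
  then have "measure M {\<omega> \<in> space M. \<forall>n::nat. a \<le> real n \<and> real n \<le> b \<longrightarrow>
      (F n \<omega> - g (y n)) / deriv g (y n) \<le> \<kappa>} \<ge> 1 - \<epsilon>"
    unfolding setEq using U by linarith
  then show ?thesis unfolding a_def b_def y_def \<sigma>_def .
qed

end

theorem lemma16:
  fixes lam :: real and \<mu> :: "real measure" and m' m'' :: "real \<Rightarrow> real"
    and \<kappa>0 :: real
    and M :: "'a measure" and F :: "nat \<Rightarrow> 'a \<Rightarrow> real"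
  assumes lam: "lam > 0"
    and mu_prob: "prob_space \<mu>" and mu_sets: "sets \<mu> = sets borel"
    and mu_supp: "measure \<mu> {0<..<1} = 1"
    and tail_pos: "\<forall>x\<in>{0..<1}. measure \<mu> {x<..<1} > 0"
    and d1: "\<forall>x\<in>{0..<1}. (tail_m \<mu> has_real_derivative m' x) (at x within {0..<1})"
    and d2: "\<forall>x\<in>{0..<1}. (m' has_real_derivative m'' x) (at x within {0..<1})"
    and m1_pos: "\<forall>x\<in>{0..<1}. m' x > 0"
    and m2_pos: "\<forall>x\<in>{0..<1}. m'' x > 0"
    and lim1: "((\<lambda>x. m'' x / (m' x)\<^sup>2) \<longlongrightarrow> 0) (at_left 1)"
    and lim2: "((\<lambda>x. m'' x * tail_m \<mu> x * x / (m' x)\<^sup>2) \<longlongrightarrow> \<kappa>0) (at_left 1)"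
    and kappa0_pos: "\<kappa>0 > 0"
    and lim3: "((\<lambda>x. tail_m \<mu> x / m' x) \<longlongrightarrow> 0) (at_left 1)"
    and M_prob: "prob_space M"
    and F_indep: "prob_space.indep_vars M (\<lambda>_. borel) F {1..}"
    and F_law: "\<forall>n\<ge>1. distr M borel (F n) = \<mu>"
  shows "\<forall>\<epsilon>>0. \<forall>v>0. \<exists>\<kappa>>0. eventually (\<lambda>t.
           measure M {\<omega> \<in> space M. \<forall>n::nat.
              exp (lam * (sigma_t \<mu> lam t - v * sqrt (sigma_t \<mu> lam t))) \<le> real n \<and>
              real n \<le> exp (lam * (sigma_t \<mu> lam t + v * sqrt (sigma_t \<mu> lam t))) \<longrightarrow>
              (F n \<omega> - inv_g \<mu> (ln (real n * sqrt (sigma_t \<mu> lam t))))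
                / deriv (inv_g \<mu>) (ln (real n * sqrt (sigma_t \<mu> lam t))) \<le> \<kappa>}
           \<ge> 1 - \<epsilon>) at_top"
    apply (intro allI impI)
  subgoal premises prems for \<epsilon> v
  proof -
    have eps: "\<epsilon> > 0" and v: "v > 0" using prems by auto
    have Lh: "L \<mu> m' m''" unfolding L_def
      using mu_prob mu_sets mu_supp tail_pos d1 d2 m1_pos m2_pos by blast
    define D0 where "D0 = deriv (inv_g \<mu>) 0"
    define K0 where "K0 = (if D0 = 0 then 0 else 1 / \<bar>D0\<bar>)"
    define C where "C = 1 + 2 * lam * v"
    define \<kappa> where "\<kappa> = max (max 1 K0) (ln (C / \<epsilon>))"
    have "2 * lam * v > 0" using lam v by simp
    then have Cpos: "C > 0" by (simp add: C_def)
    have kpos: "\<kappa> > 0" by (simp add: \<kappa>_def)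
    have K: "deriv (inv_g \<mu>) 0 \<noteq> 0 \<Longrightarrow> \<kappa> \<ge> 1 / \<bar>deriv (inv_g \<mu>) 0\<bar>"
      by (simp add: \<kappa>_def K0_def D0_def)
    have "exp (- \<kappa>) \<le> exp (- ln (C / \<epsilon>))" by (simp add: \<kappa>_def)
    also have "\<dots> = \<epsilon> / C" using Cpos eps by (simp add: exp_minus)
    finally have "exp (- \<kappa>) * C \<le> \<epsilon> / C * C" using Cpos by (intro mult_right_mono) auto
    then have E: "exp (- \<kappa>) * (1 + 2 * lam * v) \<le> \<epsilon>" using Cpos by (simp add: C_def)
    show ?thesis
      using kpos L.main_bound[OF Lh lam v kpos K E M_prob F_indep F_law]
      by (intro exI[of _ \<kappa>] conjI always_eventually allI) auto
  qed
  done

end
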